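(* Let $n>1$ and let $p$ be a probability vector on $[n]$ with all $p_j>0$. If $t_1,\dots,t_{n-1}\ge 0$, then $$\exp\left(-\sum_{j=1}^{n-1} t_j\, e^{(p)}_{(j,j)}\right)\in\langle p\rangle^+ .$$
   Context: $1=(1,\dots,1)^T\in\mathbb{R}^n$; $r_j := p_j/p_n$; $e^{(p)}_{(j,k)} := (e_j - r_j e_n)(e_k^T - e_n^T)$ for $j,k\in[n-1]$, with $\{e_j\}$ the standard basis. $\langle p\rangle^+ := \{P\in M_n(\mathbb{R}) : P1=1,\ P\ge 0 \text{ entrywise},\ pP=p\}$ (row-stochastic matrices with invariant measure $p$). *)

theory Defs
  imports "Jordan_Normal_Form.Matrix"
begin

text \<open>Indices: the paper's [n] = {1..n} is rendered as {0..<n}; the paper's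
  last index n becomes n - 1.\<close>

definition mat_exp :: "real mat \<Rightarrow> real mat" where
  "mat_exp A = mat (dim_row A) (dim_col A)
     (\<lambda>(i, j). \<Sum>k. (A ^\<^sub>m k) $$ (i, j) / fact k)"

definition rp :: "nat \<Rightarrow> (nat \<Rightarrow> real) \<Rightarrow> nat \<Rightarrow> real" where
  "rp n p j = p j / p (n - 1)"

text \<open>e^(p)_(j,k) = (e_j - r_j e_n)(e_k^T - e_n^T), an n x n matrix\<close>
definition ep_mat :: "nat \<Rightarrow> (nat \<Rightarrow> real) \<Rightarrow> nat \<Rightarrow> nat \<Rightarrow> real mat" where
  "ep_mat n p j k = mat n n (\<lambda>(a, b).
     ((if a = j then 1 else 0) - rp n p j * (if a = n - 1 then 1 else 0)) *
     ((if b = k then 1 else 0) - (if b = n - 1 then 1 else 0)))"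

definition gen_mat :: "nat \<Rightarrow> (nat \<Rightarrow> real) \<Rightarrow> (nat \<Rightarrow> real) \<Rightarrow> real mat" where
  "gen_mat n p t = mat n n (\<lambda>(a, b). \<Sum>j<n - 1. t j * (ep_mat n p j j $$ (a, b)))"

definition stoch_p :: "nat \<Rightarrow> (nat \<Rightarrow> real) \<Rightarrow> real mat set" where
  "stoch_p n p = {P \<in> carrier_mat n n.
      (\<forall>i<n. (\<Sum>j<n. P $$ (i, j)) = 1) \<and>
      (\<forall>i<n. \<forall>j<n. 0 \<le> P $$ (i, j)) \<and>
      (\<forall>j<n. (\<Sum>i<n. p i * P $$ (i, j)) = p j)}"

end

theory Submission
  imports Defs
begin

lemma pow_Suc_entry:
  fixes A :: "real mat"
  assumes A: "A \<in> carrier_mat n n" and a: "a < n" and b: "b < n"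
  shows "(A ^\<^sub>m Suc k) $$ (a,b) = (\<Sum>l<n. (A ^\<^sub>m k) $$ (a,l) * A $$ (l,b))"
  using A a b by (simp add: scalar_prod_def lessThan_atLeast0)

lemma pow_zero_entry:
  fixes A :: "real mat"
  assumes A: "A \<in> carrier_mat n n" and a: "a < n" and b: "b < n"
  shows "(A ^\<^sub>m 0) $$ (a,b) = (if a = b then 1 else 0)"
  using A a b by simp

lemma pow_binom:
  fixes A B :: "real mat" and c :: real
  assumes A: "A \<in> carrier_mat n n" and B: "B \<in> carrier_mat n n"
    and AB: "\<And>a b. a < n \<Longrightarrow> b < n \<Longrightarrow> A $$ (a,b) = B $$ (a,b) - (if a = b then c else 0)"
  shows "a < n \<Longrightarrow> b < n \<Longrightarrow> (A ^\<^sub>m k) $$ (a,b) =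
     (\<Sum>i\<le>k. real (k choose i) * (-c)^(k-i) * (B ^\<^sub>m i) $$ (a,b))"
proof (induction k arbitrary: b)
  case 0
  then show ?case using A B by simp
next
  case (Suc k)
  have "(A ^\<^sub>m Suc k) $$ (a,b) = (\<Sum>l<n. (A ^\<^sub>m k) $$ (a,l) * A $$ (l,b))"
    using pow_Suc_entry[OF A Suc.prems] .
  also have "\<dots> = (\<Sum>l<n. (\<Sum>i\<le>k. real (k choose i) * (-c)^(k-i) * (B ^\<^sub>m i) $$ (a,l)) * (B $$ (l,b) - (if l = b then c else 0)))"
    using Suc by (intro sum.cong) (auto simp: AB)
  also have "\<dots> = (\<Sum>i\<le>k. real (k choose i) * (-c)^(k-i) * (\<Sum>l<n. (B ^\<^sub>m i) $$ (a,l) * B $$ (l,b)))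
      - c * (\<Sum>i\<le>k. real (k choose i) * (-c)^(k-i) * (B ^\<^sub>m i) $$ (a,b))"
  proof -
    let ?X = "\<lambda>l. (\<Sum>i\<le>k. real (k choose i) * (-c)^(k-i) * (B ^\<^sub>m i) $$ (a,l))"
    have "(\<Sum>l<n. ?X l * (B $$ (l,b) - (if l = b then c else 0)))
        = (\<Sum>l<n. ?X l * B $$ (l,b)) - (\<Sum>l<n. (if l = b then c * ?X l else 0))"
      by (subst sum_subtractf[symmetric]) (rule sum.cong, auto simp: algebra_simps)
    also have "(\<Sum>l<n. (if l = b then c * ?X l else 0)) = c * ?X b"
      using Suc.prems by (simp add: sum.delta)
    also have "(\<Sum>l<n. ?X l * B $$ (l,b)) = (\<Sum>i\<le>k. real (k choose i) * (-c)^(k-i) * (\<Sum>l<n. (B ^\<^sub>m i) $$ (a,l) * B $$ (l,b)))"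
      by (simp add: sum_distrib_left sum_distrib_right sum.swap[of _ "{..<n}"] mult.assoc)
    finally show ?thesis .
  qed
  also have "\<dots> = (\<Sum>i\<le>k. real (k choose i) * (-c)^(k-i) * (B ^\<^sub>m Suc i) $$ (a,b))
      + (\<Sum>i\<le>k. real (k choose i) * (-c)^(Suc k-i) * (B ^\<^sub>m i) $$ (a,b))"
  proof -
    have e1: "(\<Sum>i\<le>k. real (k choose i) * (-c)^(k-i) * (\<Sum>l<n. (B ^\<^sub>m i) $$ (a,l) * B $$ (l,b)))
       = (\<Sum>i\<le>k. real (k choose i) * (-c)^(k-i) * (B ^\<^sub>m Suc i) $$ (a,b))"
      by (rule sum.cong[OF refl]) (simp only: pow_Suc_entry[OF B \<open>a < n\<close> \<open>b < n\<close>])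
    have e2: "- c * (\<Sum>i\<le>k. real (k choose i) * (-c)^(k-i) * (B ^\<^sub>m i) $$ (a,b))
       = (\<Sum>i\<le>k. real (k choose i) * (-c)^(Suc k-i) * (B ^\<^sub>m i) $$ (a,b))"
      unfolding sum_distrib_left
      by (rule sum.cong[OF refl]) (simp add: Suc_diff_le)
    show ?thesis using e1 e2 by simp
  qed
  also have "\<dots> = (\<Sum>i\<le>Suc k. real (Suc k choose i) * (-c)^(Suc k-i) * (B ^\<^sub>m i) $$ (a,b))"
  proof -
    define F where "F i = (B ^\<^sub>m i) $$ (a,b)" for i
    define g where "g i = real (k choose i) * (-c)^(Suc k-i) * F i" for i
    have "(\<Sum>i\<le>k. g i) = (\<Sum>i\<le>Suc k. g i)" by (simp add: g_def)
    also have "\<dots> = g 0 + (\<Sum>i\<le>k. g (Suc i))" by (rule sum.atMost_Suc_shift)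
    finally have L: "(\<Sum>i\<le>k. g i) = (-c)^(Suc k) * F 0 + (\<Sum>i\<le>k. real (k choose Suc i) * (-c)^(k-i) * F (Suc i))"
      by (simp add: g_def)
    have R: "(\<Sum>i\<le>Suc k. real (Suc k choose i) * (-c)^(Suc k-i) * F i)
       = (-c)^(Suc k) * F 0 + (\<Sum>i\<le>k. real (Suc k choose Suc i) * (-c)^(k-i) * F (Suc i))"
      by (subst sum.atMost_Suc_shift) simp
    have R2: "(\<Sum>i\<le>k. real (Suc k choose Suc i) * (-c)^(k-i) * F (Suc i))
      = (\<Sum>i\<le>k. real (k choose i) * (-c)^(k-i) * F (Suc i)) + (\<Sum>i\<le>k. real (k choose Suc i) * (-c)^(k-i) * F (Suc i))"
      by (simp add: sum.distrib[symmetric] algebra_simps)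
    show ?thesis using L R R2 unfolding g_def F_def by simp
  qed
  finally show ?case .
qed
lemma pow_nonneg_bound:
  fixes B :: "real mat"
  assumes B: "B \<in> carrier_mat n n"
    and nn: "\<And>a b. a < n \<Longrightarrow> b < n \<Longrightarrow> 0 \<le> B $$ (a,b)"
    and bd: "\<And>a b. a < n \<Longrightarrow> b < n \<Longrightarrow> B $$ (a,b) \<le> M"
  shows "a < n \<Longrightarrow> b < n \<Longrightarrow> 0 \<le> (B ^\<^sub>m i) $$ (a,b) \<and> (B ^\<^sub>m i) $$ (a,b) \<le> (real n * M)^i"
proof (induction i arbitrary: b)
  case 0
  then show ?case using B by simp
next
  case (Suc i)
  have M0: "0 \<le> M" using nn[of b b] bd[of b b] Suc.prems by linarith
  have eq: "(B ^\<^sub>m Suc i) $$ (a,b) = (\<Sum>l<n. (B ^\<^sub>m i) $$ (a,l) * B $$ (l,b))"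
    using pow_Suc_entry[OF B Suc.prems] .
  have "0 \<le> (\<Sum>l<n. (B ^\<^sub>m i) $$ (a,l) * B $$ (l,b))"
    using Suc nn by (intro sum_nonneg mult_nonneg_nonneg) auto
  moreover have "(\<Sum>l<n. (B ^\<^sub>m i) $$ (a,l) * B $$ (l,b)) \<le> (\<Sum>l<n. (real n * M)^i * M)"
    using Suc nn bd M0 by (intro sum_mono mult_mono) auto
  moreover have "(\<Sum>l<n. (real n * M)^i * M) = (real n * M)^Suc i" by simp
  ultimately show ?case using eq by (simp add: algebra_simps)
qed

lemma metzler_exp:
  fixes A :: "real mat"
  assumes A: "A \<in> carrier_mat n n"
    and off: "\<And>a b. a < n \<Longrightarrow> b < n \<Longrightarrow> a \<noteq> b \<Longrightarrow> 0 \<le> A $$ (a,b)"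
    and a: "a < n" and b: "b < n"
  shows "summable (\<lambda>k. (A ^\<^sub>m k) $$ (a,b) / fact k) \<and> 0 \<le> (\<Sum>k. (A ^\<^sub>m k) $$ (a,b) / fact k)"
proof -
  define c where "c = (\<Sum>x<n. \<bar>A $$ (x,x)\<bar>)"
  define B where "B = mat n n (\<lambda>(x,y). A $$ (x,y) + (if x = y then c else 0))"
  define M where "M = (\<Sum>x<n. \<Sum>y<n. \<bar>B $$ (x,y)\<bar>)"
  have Bc: "B \<in> carrier_mat n n" unfolding B_def by simp
  have c0: "0 \<le> c" unfolding c_def by (simp add: sum_nonneg)
  have AB: "\<And>x y. x < n \<Longrightarrow> y < n \<Longrightarrow> A $$ (x,y) = B $$ (x,y) - (if x = y then c else 0)"
    unfolding B_def by simp
  have Bnn: "0 \<le> B $$ (x,y)" if "x < n" "y < n" for x y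
  proof (cases "x = y")
    case True
    have "\<bar>A $$ (x,x)\<bar> \<le> c" unfolding c_def
      using that by (intro member_le_sum) auto
    then show ?thesis using True that unfolding B_def by simp
  next
    case False
    then show ?thesis using that off unfolding B_def by simp
  qed
  have Bbd: "B $$ (x,y) \<le> M" if "x < n" "y < n" for x y
  proof -
    have "\<bar>B $$ (x,y)\<bar> \<le> (\<Sum>y<n. \<bar>B $$ (x,y)\<bar>)"
      using that by (intro member_le_sum) auto
    also have "\<dots> \<le> M" unfolding M_def
      using that by (intro member_le_sum[of x "{..<n}"]) (auto intro: sum_nonneg)
    finally show ?thesis by simp
  qed
  define u where "u i = (B ^\<^sub>m i) $$ (a,b) / fact i" for i
  define v where "v l = (-c)^l / fact l" for l :: nat
  have bnd: "0 \<le> (B ^\<^sub>m i) $$ (a,b) \<and> (B ^\<^sub>m i) $$ (a,b) \<le> (real n * M)^i" for i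
    using pow_nonneg_bound[OF Bc Bnn Bbd a b] .
  have su: "summable (\<lambda>i. norm (u i))"
  proof (rule summable_comparison_test'[OF summable_exp[of "real n * M"], of 0])
    fix i :: nat
    show "norm (norm (u i)) \<le> inverse (fact i) * (real n * M) ^ i"
      using bnd[of i] unfolding u_def by (simp add: divide_inverse mult.commute)
  qed
  have sv: "summable (\<lambda>l. norm (v l))"
  proof -
    have "summable (\<lambda>l. inverse (fact l) * c ^ l)" by (rule summable_exp)
    moreover have "norm (v l) = inverse (fact l) * c ^ l" for l
      unfolding v_def using c0 by (simp add: power_abs divide_inverse mult.commute abs_mult)
    ultimately show ?thesis by simp
  qed
  have CP: "(\<lambda>k. \<Sum>i\<le>k. u i * v (k - i)) sums ((\<Sum>k. u k) * (\<Sum>k. v k))"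
    by (rule Cauchy_product_sums[OF su sv])
  have trm: "(\<Sum>i\<le>k. u i * v (k - i)) = (A ^\<^sub>m k) $$ (a,b) / fact k" for k
  proof -
    have "(A ^\<^sub>m k) $$ (a,b) / fact k = (\<Sum>i\<le>k. real (k choose i) * (-c)^(k-i) * (B ^\<^sub>m i) $$ (a,b)) / fact k"
      using pow_binom[OF A Bc AB a b] by simp
    also have "\<dots> = (\<Sum>i\<le>k. u i * v (k - i))"
      unfolding sum_divide_distrib
    proof (rule sum.cong[OF refl])
      fix i assume "i \<in> {..k}"
      then have ik: "i \<le> k" by simp
      show "real (k choose i) * (-c)^(k-i) * (B ^\<^sub>m i) $$ (a,b) / fact k = u i * v (k - i)"
        unfolding u_def v_def binomial_fact[OF ik] by (simp add: field_simps)
    qed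
    finally show ?thesis by simp
  qed
  have S: "(\<lambda>k. (A ^\<^sub>m k) $$ (a,b) / fact k) sums ((\<Sum>k. u k) * (\<Sum>k. v k))"
    using CP unfolding trm .
  have u0: "0 \<le> (\<Sum>k. u k)"
    using su bnd unfolding u_def by (intro suminf_nonneg) auto
  have v0: "(\<Sum>k. v k) = exp (-c)"
    unfolding v_def exp_def by (simp add: divide_inverse scaleR_conv_of_real mult.commute)
  show ?thesis using S u0 v0 by (auto simp: sums_iff)
qed

lemma row_pow:
  fixes A :: "real mat"
  assumes A: "A \<in> carrier_mat n n" and rs: "\<And>l. l < n \<Longrightarrow> (\<Sum>b<n. A $$ (l,b)) = 0"
  shows "a < n \<Longrightarrow> (\<Sum>b<n. (A ^\<^sub>m k) $$ (a,b)) = (if k = 0 then 1 else 0)"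
proof (induction k)
  case 0
  then show ?case using A by (simp add: sum.delta)
next
  case (Suc k)
  have "(\<Sum>b<n. (A ^\<^sub>m Suc k) $$ (a,b)) = (\<Sum>b<n. \<Sum>l<n. (A ^\<^sub>m k) $$ (a,l) * A $$ (l,b))"
    using pow_Suc_entry[OF A Suc.prems] by simp
  also have "\<dots> = (\<Sum>l<n. (A ^\<^sub>m k) $$ (a,l) * (\<Sum>b<n. A $$ (l,b)))"
    unfolding sum_distrib_left by (subst sum.swap) simp
  also have "\<dots> = 0" using rs by simp
  finally show ?case by simp
qed

lemma col_pow:
  fixes A :: "real mat"
  assumes A: "A \<in> carrier_mat n n" and cs: "\<And>b. b < n \<Longrightarrow> (\<Sum>a<n. p a * A $$ (a,b)) = 0"
  shows "b < n \<Longrightarrow> (\<Sum>a<n. p a * (A ^\<^sub>m k) $$ (a,b)) = (if k = 0 then p b else 0)"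
proof (induction k arbitrary: b)
  case 0
  have "(\<Sum>a<n. p a * (A ^\<^sub>m 0) $$ (a,b)) = (\<Sum>a<n. if a = b then p b else 0)"
    by (rule sum.cong[OF refl]) (use A 0 in auto)
  then show ?case using 0 by simp
next
  case (Suc k)
  have "(\<Sum>a<n. p a * (A ^\<^sub>m Suc k) $$ (a,b)) = (\<Sum>a<n. p a * (\<Sum>l<n. (A ^\<^sub>m k) $$ (a,l) * A $$ (l,b)))"
  proof (rule sum.cong[OF refl])
    fix a assume "a \<in> {..<n}"
    then show "p a * (A ^\<^sub>m Suc k) $$ (a,b) = p a * (\<Sum>l<n. (A ^\<^sub>m k) $$ (a,l) * A $$ (l,b))"
      using pow_Suc_entry[OF A _ Suc.prems, of a k] by simp
  qed
  also have "\<dots> = (\<Sum>l<n. (\<Sum>a<n. p a * (A ^\<^sub>m k) $$ (a,l)) * A $$ (l,b))"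
    unfolding sum_distrib_left sum_distrib_right by (subst sum.swap) (simp add: mult.assoc)
  also have "\<dots> = 0"
  proof (cases k)
    case 0
    then show ?thesis using Suc.IH cs[OF Suc.prems] by simp
  next
    case (Suc k')
    then show ?thesis using Suc.IH by simp
  qed
  finally show ?case by simp
qed

lemma mat_exp_stoch:
  fixes A :: "real mat"
  assumes A: "A \<in> carrier_mat n n"
    and off: "\<And>a b. a < n \<Longrightarrow> b < n \<Longrightarrow> a \<noteq> b \<Longrightarrow> 0 \<le> A $$ (a,b)"
    and rs: "\<And>l. l < n \<Longrightarrow> (\<Sum>b<n. A $$ (l,b)) = 0"
    and cs: "\<And>b. b < n \<Longrightarrow> (\<Sum>a<n. p a * A $$ (a,b)) = 0"
  shows "mat_exp A \<in> stoch_p n p"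
proof -
  have dA: "dim_row A = n" "dim_col A = n" using A by auto
  have ent: "mat_exp A $$ (a,b) = (\<Sum>k. (A ^\<^sub>m k) $$ (a,b) / fact k)" if "a < n" "b < n" for a b
    unfolding mat_exp_def using that dA by simp
  have sm: "summable (\<lambda>k. (A ^\<^sub>m k) $$ (a,b) / fact k)" if "a < n" "b < n" for a b
    using metzler_exp[OF A off that] by blast
  have car: "mat_exp A \<in> carrier_mat n n" unfolding mat_exp_def using dA by simp
  have nn: "\<forall>i<n. \<forall>j<n. 0 \<le> mat_exp A $$ (i, j)"
    using metzler_exp[OF A off] ent by auto
  have row: "(\<Sum>j<n. mat_exp A $$ (i, j)) = 1" if i: "i < n" for i
  proof -
    have "(\<Sum>j<n. mat_exp A $$ (i, j)) = (\<Sum>j<n. \<Sum>k. (A ^\<^sub>m k) $$ (i,j) / fact k)"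
      using ent i by simp
    also have "\<dots> = (\<Sum>k. \<Sum>j<n. (A ^\<^sub>m k) $$ (i,j) / fact k)"
      using sm i by (intro suminf_sum[symmetric]) auto
    also have "\<dots> = (\<Sum>k. if k = 0 then 1 else 0)"
    proof (rule arg_cong[where f=suminf], rule ext)
      fix k
      show "(\<Sum>j<n. (A ^\<^sub>m k) $$ (i,j) / fact k) = (if k = 0 then 1 else 0)"
        by (simp only: sum_divide_distrib[symmetric] row_pow[OF A rs i, of k]) simp
    qed
    also have "\<dots> = 1"
      using sums_single[of 0 "\<lambda>_. 1::real"] by (simp add: sums_iff)
    finally show ?thesis .
  qed
  have col: "(\<Sum>i<n. p i * mat_exp A $$ (i, j)) = p j" if j: "j < n" for j
  proof -
    have "(\<Sum>i<n. p i * mat_exp A $$ (i, j)) = (\<Sum>i<n. \<Sum>k. p i * ((A ^\<^sub>m k) $$ (i,j) / fact k))"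
      using ent j suminf_mult[OF sm[OF _ j]] by (intro sum.cong) auto
    also have "\<dots> = (\<Sum>k. \<Sum>i<n. p i * ((A ^\<^sub>m k) $$ (i,j) / fact k))"
      using sm j by (intro suminf_sum[symmetric] summable_mult) auto
    also have "\<dots> = (\<Sum>k. if k = 0 then p j else 0)"
    proof (rule arg_cong[where f=suminf], rule ext)
      fix k
      show "(\<Sum>i<n. p i * ((A ^\<^sub>m k) $$ (i,j) / fact k)) = (if k = 0 then p j else 0)"
        by (simp only: times_divide_eq_right sum_divide_distrib[symmetric] col_pow[OF A cs j, of k]) simp
    qed
    also have "\<dots> = p j"
      using sums_single[of 0 "\<lambda>_. p j"] by (simp add: sums_iff)
    finally show ?thesis .
  qed
  show ?thesis unfolding stoch_p_def using car nn row col by auto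
qed

theorem lemma2:
  fixes n :: nat and p t :: "nat \<Rightarrow> real"
  assumes "n > 1"
    and "\<forall>j<n. p j > 0"
    and "(\<Sum>j<n. p j) = 1"
    and "\<forall>j<n - 1. t j \<ge> 0"
  shows "mat_exp (- gen_mat n p t) \<in> stoch_p n p"
proof -
  define m where "m = n - 1"
  have mn: "m < n" using assms(1) unfolding m_def by simp
  define X where "X j a = (if a = j then 1 else 0) - rp n p j * (if a = m then 1 else 0)" for j a :: nat
  define Y where "Y j b = (if b = j then 1 else (0::real)) - (if b = m then 1 else 0)" for j b :: nat
  define A where "A = - gen_mat n p t"
  have A: "A \<in> carrier_mat n n" unfolding A_def gen_mat_def by simp
  have Ae: "A $$ (a,b) = - (\<Sum>j<m. t j * (X j a * Y j b))" if "a < n" "b < n" for a b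
    unfolding A_def gen_mat_def ep_mat_def X_def Y_def m_def using that by simp
  have rpos: "0 \<le> rp n p j" if "j < m" for j
    unfolding rp_def using assms(2) that mn m_def
    by (metis less_imp_le divide_nonneg_pos order.strict_trans)
  have off: "0 \<le> A $$ (a,b)" if "a < n" "b < n" "a \<noteq> b" for a b
  proof -
    have "t j * (X j a * Y j b) \<le> 0" if j: "j < m" for j
    proof -
      have t0: "0 \<le> t j" using assms(4) j m_def by simp
      have r0: "0 \<le> rp n p j" using rpos j .
      have "X j a * Y j b \<le> 0"
        unfolding X_def Y_def using \<open>a \<noteq> b\<close> j r0 by auto
      then show ?thesis using t0 by (simp add: mult_nonneg_nonpos)
    qed
    then have "(\<Sum>j<m. t j * (X j a * Y j b)) \<le> 0" by (intro sum_nonpos) auto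
    then show ?thesis using Ae[OF that(1,2)] by simp
  qed
  have Ysum: "(\<Sum>b<n. Y j b) = 0" if "j < m" for j
    unfolding Y_def using that mn by (simp add: sum_subtractf)
  have Xsum: "(\<Sum>a<n. p a * X j a) = 0" if "j < m" for j
  proof -
    have pm: "p m > 0" using assms(2) mn by simp
    have h: "(\<Sum>a<n. p a * (rp n p j * (if a = m then 1 else 0))) = (\<Sum>a<n. if a = m then p m * rp n p j else 0)"
      by (rule sum.cong) auto
    have "(\<Sum>a<n. p a * X j a) = p j - p m * rp n p j"
      unfolding X_def using that mn h
      by (simp add: right_diff_distrib sum_subtractf if_distrib[of "(*) (p _)"] sum.delta cong: if_cong)
    also have "\<dots> = 0" unfolding rp_def m_def[symmetric] using pm by simp
    finally show ?thesis .
  qed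
  have rs: "(\<Sum>b<n. A $$ (l,b)) = 0" if "l < n" for l
  proof -
    have "(\<Sum>b<n. A $$ (l,b)) = - (\<Sum>b<n. \<Sum>j<m. t j * X j l * Y j b)"
      using Ae that by (simp add: sum_negf mult.assoc)
    also have "\<dots> = - (\<Sum>j<m. t j * X j l * (\<Sum>b<n. Y j b))"
      unfolding sum_distrib_left by (subst sum.swap) simp
    also have "\<dots> = 0" using Ysum by simp
    finally show ?thesis .
  qed
  have cs: "(\<Sum>a<n. p a * A $$ (a,b)) = 0" if "b < n" for b
  proof -
    have "(\<Sum>a<n. p a * A $$ (a,b)) = - (\<Sum>a<n. \<Sum>j<m. t j * Y j b * (p a * X j a))"
      using Ae that by (simp add: sum_negf sum_distrib_left ac_simps)
    also have "\<dots> = - (\<Sum>j<m. t j * Y j b * (\<Sum>a<n. p a * X j a))"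
      unfolding sum_distrib_left by (subst sum.swap) simp
    also have "\<dots> = 0" using Xsum by simp
    finally show ?thesis .
  qed
  show ?thesis using mat_exp_stoch[OF A off rs cs] unfolding A_def .
qed

end
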